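(* For every integer $n\ge 3$, let $\delta_1,\dots,\delta_n$ be the eigenvalues of $\mathcal L_S$ (all positive). Then $$\sum_{i=1}^{n}\frac{1}{\delta_{i}}=\frac{\sqrt{3}\,n}{2}\cdot\frac{p^{n}-q^{n}}{p^{n}+q^{n}+2}.$$
   Context: $p=2+\sqrt3$, $q=2-\sqrt3$. $\mathcal L_S$ denotes the $n\times n$ matrix with all diagonal entries equal to $\tfrac43$, entries $(i,i+1)$ and $(i+1,i)$ equal to $-\tfrac13$ for $1\le i\le n-1$, entries $(1,n)$ and $(n,1)$ equal to $+\tfrac13$, and all other entries $0$. *)

theory Defs
  imports "Jordan_Normal_Form.Char_Poly"
begin

definition pp :: real where "pp = 2 + sqrt 3"
definition qq :: real where "qq = 2 - sqrt 3"

definition LS :: "nat \<Rightarrow> real mat" where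
  "LS n = mat n n (\<lambda>(i,j).
      if i = j then 4/3
      else if j = i + 1 \<or> i = j + 1 then -1/3
      else if (i = 0 \<and> j = n - 1) \<or> (i = n - 1 \<and> j = 0) then 1/3
      else 0)"

end

theory Submission
  imports Defs "Jordan_Normal_Form.Schur_Decomposition"
begin

lemma pq1: "pp * qq = 1"
  unfolding pp_def qq_def by (simp add: algebra_simps power2_eq_square[symmetric])
lemma pp_pos: "pp > 0" unfolding pp_def by (simp add: add_pos_nonneg)
lemma qq_pos: "qq > 0" unfolding qq_def
  by (smt (verit) real_sqrt_less_iff real_sqrt_four)
lemma pp_sq: "pp^2 = 4*pp - 1" unfolding pp_def by (simp add: power2_eq_square algebra_simps)
lemma qq_sq: "qq^2 = 4*qq - 1" unfolding qq_def by (simp add: power2_eq_square algebra_simps)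

definition aa :: "nat \<Rightarrow> real" where "aa n = 1 / (2 * sqrt 3 * (1 + qq^n))"
definition uu :: "nat \<Rightarrow> nat \<Rightarrow> real" where "uu n k = aa n * (qq^k - qq^n * pp^k)"

lemma uu_rec: "uu n (Suc (Suc k)) = 4 * uu n (Suc k) - uu n k"
proof -
  have "pp^(Suc (Suc k)) = pp^k * pp^2" by (simp add: power2_eq_square)
  also have "\<dots> = 4 * pp^(Suc k) - pp^k" unfolding pp_sq by (simp add: algebra_simps)
  finally have 1: "pp^(Suc (Suc k)) = 4 * pp^(Suc k) - pp^k" .
  have "qq^(Suc (Suc k)) = qq^k * qq^2" by (simp add: power2_eq_square)
  also have "\<dots> = 4 * qq^(Suc k) - qq^k" unfolding qq_sq by (simp add: algebra_simps)
  finally have 2: "qq^(Suc (Suc k)) = 4 * qq^(Suc k) - qq^k" .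
  note 1 2
  show ?thesis unfolding uu_def 1 2 by (simp only: algebra_simps)
qed

lemma uu_anti: assumes "k \<le> n" shows "uu n (n - k) = - uu n k"
proof -
  have pk: "pp^(n-k) * qq^(n-k) = 1" by (metis pq1 power_mult_distrib power_one)
  have e1: "qq^(n-k) = qq^n * pp^k"
  proof -
    have "qq^n * pp^k = qq^(n-k) * (qq^k * pp^k)" using assms by (simp add: power_add[symmetric])
    also have "\<dots> = qq^(n-k)" by (simp add: power_mult_distrib[symmetric] pq1 mult.commute)
    finally show ?thesis by simp
  qed
  have e2: "qq^n * pp^(n-k) = qq^k"
  proof -
    have "qq^n = qq^(n-k) * qq^k" using assms by (simp add: power_add[symmetric])
    then show ?thesis using pk by (simp add: algebra_simps)
  qed
  show ?thesis unfolding uu_def using e1 e2 by (simp add: algebra_simps)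
qed

lemma uu_base: "4 * uu n 0 - 2 * uu n 1 = 1"
proof -
  have h: "1 + qq^n > 0" using qq_pos by (simp add: add_pos_pos)
  have a: "4 - 2*qq = 2 * sqrt 3" "4 - 2 * pp = - 2 * sqrt 3" unfolding pp_def qq_def by simp_all
  have "4 * uu n 0 - 2 * uu n 1 = aa n * ((4 - 2*qq) - qq^n * (4 - 2*pp))"
    unfolding uu_def by (simp add: algebra_simps)
  also have "\<dots> = aa n * (2 * sqrt 3 * (1 + qq^n))" unfolding a by (simp add: algebra_simps)
  also have "\<dots> = 1" unfolding aa_def using h by simp
  finally show ?thesis .
qed


lemma row_sum:
  assumes n: "n \<ge> 3" and i: "i < n"
  shows "(\<Sum>k\<in>{0..<n}. LS n $$ (i,k) * g k) =
     4/3 * g i + (if i = 0 then 1/3 else -1/3) * g (if i = 0 then n - 1 else i - 1)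
     + (if i = n - 1 then 1/3 else -1/3) * g (if i = n - 1 then 0 else i + 1)"
proof -
  define pr where "pr = (if i = 0 then n - 1 else i - 1)"
  define nx where "nx = (if i = n - 1 then 0 else i + 1)"
  have d: "pr \<noteq> i" "nx \<noteq> i" "pr \<noteq> nx" using n i unfolding pr_def nx_def by auto
  have r: "pr < n" "nx < n" using n i unfolding pr_def nx_def by auto
  have z: "LS n $$ (i,k) * g k = 0" if "k \<in> {0..<n} - {i,pr,nx}" for k
    using that n i unfolding LS_def pr_def nx_def by (auto split: if_splits)
  have "(\<Sum>k\<in>{0..<n}. LS n $$ (i,k) * g k) = (\<Sum>k\<in>{i,pr,nx}. LS n $$ (i,k) * g k)"
    by (rule sum.mono_neutral_right) (use z r i in auto)
  also have "\<dots> = LS n $$ (i,i) * g i + LS n $$ (i,pr) * g pr + LS n $$ (i,nx) * g nx"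
    using d by simp
  also have "LS n $$ (i,i) = 4/3" using i unfolding LS_def by simp
  also have "LS n $$ (i,pr) = (if i = 0 then 1/3 else -1/3)" using i r n unfolding LS_def pr_def by auto
  also have "LS n $$ (i,nx) = (if i = n - 1 then 1/3 else -1/3)" using i r n unfolding LS_def nx_def by auto
  finally show ?thesis unfolding pr_def nx_def .
qed

definition dd :: "nat \<Rightarrow> nat \<Rightarrow> nat" where "dd i j = (if i \<le> j then j - i else i - j)"
definition MM :: "nat \<Rightarrow> real mat" where "MM n = mat n n (\<lambda>(i,j). 3 * uu n (dd i j))"

lemma uu_rec': "k \<ge> 1 \<Longrightarrow> uu n (k - 1) + uu n (k + 1) = 4 * uu n k"
  using uu_rec[of n "k - 1"] by (cases k) (auto simp: algebra_simps)

lemma LM_entry: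
  assumes n: "n \<ge> 3" and i: "i < n" and j: "j < n"
  shows "4 * uu n (dd i j) + (if i = 0 then 1 else -1) * uu n (dd (if i = 0 then n - 1 else i - 1) j)
     + (if i = n - 1 then 1 else -1) * uu n (dd (if i = n - 1 then 0 else i + 1) j) = (if i = j then 1 else 0)"
proof -
  have b: "4 * uu n 0 - 2 * uu n 1 = 1" by (rule uu_base)
  have a1: "uu n (n - 1) = - uu n 1" using uu_anti[of 1 n] n by simp
  consider "i = j" | "i < j" | "j < i" by linarith
  then show ?thesis
  proof cases
    case 1
    then show ?thesis using b a1 n i unfolding dd_def by auto
  next
    case 2
    show ?thesis
    proof (cases "i = 0")
      case True
      have "uu n (n - 1 - j) = - uu n (j + 1)" using uu_anti[of "j+1" n] j by (simp add: diff_diff_add)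
      moreover have "uu n (j - 1) + uu n (j + 1) = 4 * uu n j" using uu_rec' 2 True by simp
      ultimately show ?thesis using True 2 n j unfolding dd_def by auto
    next
      case False
      have "uu n (j - i - 1) + uu n (j - i + 1) = 4 * uu n (j - i)" using uu_rec'[of "j - i"] 2 by simp
      moreover have "j - (i - 1) = j - i + 1" "j - (i+1) = j - i - 1" using 2 False by auto
      ultimately show ?thesis using False 2 n j unfolding dd_def by auto
    qed
  next
    case 3
    show ?thesis
    proof (cases "i = n - 1")
      case True
      have "uu n j = - uu n (n - j)" using uu_anti[of j n] j by simp
      moreover have "n - j = (n - 1 - j) + 1" using j True 3 by simp
      moreover have "uu n (i - j - 1) + uu n (i - j + 1) = 4 * uu n (i - j)" using uu_rec'[of "i - j"] 3 by simp
      moreover have "i - 1 - j = i - j - 1" by simp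
      ultimately show ?thesis using True 3 n j unfolding dd_def by auto
    next
      case False
      have "uu n (i - j - 1) + uu n (i - j + 1) = 4 * uu n (i - j)" using uu_rec'[of "i - j"] 3 by simp
      moreover have "i - 1 - j = i - j - 1" "i + 1 - j = i - j + 1" using 3 by auto
      ultimately show ?thesis using False 3 n j i unfolding dd_def by auto
    qed
  qed
qed

lemma LM: assumes n: "n \<ge> 3" shows "LS n * MM n = 1\<^sub>m n"
proof (rule eq_matI)
  fix i j assume i: "i < dim_row (1\<^sub>m n :: real mat)" and j: "j < dim_col (1\<^sub>m n :: real mat)"
  hence i: "i < n" and j: "j < n" by auto
  have "(LS n * MM n) $$ (i,j) = (\<Sum>k\<in>{0..<n}. LS n $$ (i,k) * (3 * uu n (dd k j)))"
    using i j unfolding times_mat_def scalar_prod_def by (simp add: LS_def MM_def)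
  also have "\<dots> = 4/3 * (3 * uu n (dd i j)) + (if i = 0 then 1/3 else -1/3) * (3 * uu n (dd (if i = 0 then n - 1 else i - 1) j))
     + (if i = n - 1 then 1/3 else -1/3) * (3 * uu n (dd (if i = n - 1 then 0 else i + 1) j))"
    by (rule row_sum[OF n i])
  also have "\<dots> = 4 * uu n (dd i j) + (if i = 0 then 1 else -1) * uu n (dd (if i = 0 then n - 1 else i - 1) j)
     + (if i = n - 1 then 1 else -1) * uu n (dd (if i = n - 1 then 0 else i + 1) j)"
    by (simp add: algebra_simps)
  also have "\<dots> = (1\<^sub>m n :: real mat) $$ (i,j)" using LM_entry[OF n i j] i j by simp
  finally show "(LS n * MM n) $$ (i,j) = (1\<^sub>m n :: real mat) $$ (i,j)" .
qed (auto simp: LS_def MM_def)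


lemma trace_swap:
  assumes A: "(A :: real mat) \<in> carrier_mat n m" and B: "B \<in> carrier_mat m n"
  shows "(\<Sum>i<n. (A*B)$$(i,i)) = (\<Sum>j<m. (B*A)$$(j,j))"
proof -
  have "(\<Sum>i<n. (A*B)$$(i,i)) = (\<Sum>i<n. \<Sum>k<m. A$$(i,k) * B$$(k,i))"
    using A B by (intro sum.cong) (auto simp: scalar_prod_def atLeast0LessThan)
  also have "\<dots> = (\<Sum>k<m. \<Sum>i<n. B$$(k,i) * A$$(i,k))"
    by (subst sum.swap) (simp add: mult.commute)
  also have "\<dots> = (\<Sum>j<m. (B*A)$$(j,j))"
    using A B by (intro sum.cong) (auto simp: scalar_prod_def atLeast0LessThan)
  finally show ?thesis .
qed

lemma tri_inv_diag:
  assumes T: "(T :: real mat) \<in> carrier_mat n n" and N: "N \<in> carrier_mat n n"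
    and ut: "upper_triangular T" and TN: "T * N = 1\<^sub>m n" and NT: "N * T = 1\<^sub>m n"
    and i: "i < n"
  shows "N $$ (i,i) = 1 / T $$ (i,i)"
proof -
  have "det T * det N = 1" using det_mult[OF T N] TN by simp
  hence "det T \<noteq> 0" by auto
  hence "prod_list (diag_mat T) \<noteq> 0" using det_upper_triangular[OF ut T] by simp
  hence nz: "T $$ (j,j) \<noteq> 0" if "j < n" for j
    using that T by (auto simp: prod_list_diag_prod)
  have utT: "T $$ (a,b) = 0" if "b < a" "a < n" for a b using ut that T unfolding upper_triangular_def by auto
  have low: "\<forall>i<n. j < i \<longrightarrow> N $$ (i,j) = 0" if "j < n" for j
    using that
  proof (induction j rule: less_induct)
    case (less j)
    show ?case
    proof (intro allI impI)
      fix i assume i: "i < n" "j < i"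
      have "(N * T) $$ (i,j) = (\<Sum>k\<in>{0..<n}. N $$ (i,k) * T $$ (k,j))"
        using i less.prems N T by (simp add: scalar_prod_def)
      also have "\<dots> = (\<Sum>k\<in>{0..<n}. if k = j then N $$ (i,j) * T $$ (j,j) else 0)"
      proof (rule sum.cong[OF refl])
        fix k assume k: "k \<in> {0..<n}"
        show "N $$ (i,k) * T $$ (k,j) = (if k = j then N $$ (i,j) * T $$ (j,j) else 0)"
        proof (cases k j rule: linorder_cases)
          case less
          then show ?thesis using \<open>\<And>y. y < j \<Longrightarrow> y < n \<Longrightarrow> \<forall>i<n. y < i \<longrightarrow> N $$ (i, y) = 0\<close>[of k] i k \<open>j < n\<close> by auto
        next
          case greater then show ?thesis using utT[of j k] k by auto
        qed simp
      qed
      also have "\<dots> = N $$ (i,j) * T $$ (j,j)" using less.prems by simp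
      finally have "N $$ (i,j) * T $$ (j,j) = 0" using NT i less.prems by simp
      thus "N $$ (i,j) = 0" using nz[OF less.prems] by simp
    qed
  qed
  have "(T * N) $$ (i,i) = (\<Sum>k\<in>{0..<n}. T $$ (i,k) * N $$ (k,i))"
    using i N T by (simp add: scalar_prod_def)
  also have "\<dots> = (\<Sum>k\<in>{0..<n}. if k = i then T $$ (i,i) * N $$ (i,i) else 0)"
  proof (rule sum.cong[OF refl])
    fix k assume k: "k \<in> {0..<n}"
    show "T $$ (i,k) * N $$ (k,i) = (if k = i then T $$ (i,i) * N $$ (i,i) else 0)"
    proof (cases k i rule: linorder_cases)
      case less then show ?thesis using utT[of k i] i by auto
    next
      case greater then show ?thesis using low[OF i] k by auto
    qed simp
  qed
  also have "\<dots> = T $$ (i,i) * N $$ (i,i)" using i by simp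
  finally have "T $$ (i,i) * N $$ (i,i) = 1" using TN i by simp
  thus ?thesis using nz[OF i] by (simp add: field_simps)
qed


lemma final_val: "3 * real n * uu n 0 =
   sqrt 3 * real n / 2 * ((pp ^ n - qq ^ n) / (pp ^ n + qq ^ n + 2))"
proof -
  define x where "x = pp^n"
  have xp: "x > 0" unfolding x_def using pp_pos by simp
  have qx: "qq^n = 1/x" unfolding x_def by (metis pq1 power_mult_distrib power_one nonzero_eq_divide_eq pp_pos power_not_zero less_irrefl mult.commute)
  have s3: "3 / sqrt 3 = sqrt 3" by (simp add: real_div_sqrt)
  have u: "uu n 0 = (x - 1) / (2 * sqrt 3 * (x + 1))"
  proof -
    have "uu n 0 = (1 - 1/x) / (2 * sqrt 3 * (1 + 1/x))" unfolding uu_def aa_def qx by simp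
    also have "1 - 1/x = (x - 1) / x" using xp by (simp add: field_simps)
    also have "1 + 1/x = (x + 1) / x" using xp by (simp add: field_simps)
    also have "(x - 1) / x / (2 * sqrt 3 * ((x + 1) / x)) = (x - 1) / (2 * sqrt 3 * (x + 1))"
      using xp by (simp add: divide_simps)
    finally show ?thesis .
  qed
  have r: "(pp ^ n - qq ^ n) / (pp ^ n + qq ^ n + 2) = (x - 1) / (x + 1)"
  proof -
    have "(pp ^ n - qq ^ n) / (pp ^ n + qq ^ n + 2) = (x - 1/x) / (x + 1/x + 2)" unfolding qx x_def ..
    also have "x - 1/x = ((x - 1) * (x + 1)) / x" using xp by (simp add: field_simps)
    also have "x + 1/x + 2 = ((x + 1) * (x + 1)) / x" using xp by (simp add: field_simps)
    also have "((x - 1) * (x + 1)) / x / (((x + 1) * (x + 1)) / x) = ((x - 1) * (x + 1)) / ((x + 1) * (x + 1))"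
      using xp by simp
    also have "\<dots> = (x - 1) / (x + 1)" using xp by simp
    finally show ?thesis .
  qed
  have "3 * real n * uu n 0 = (3 / sqrt 3) * real n / 2 * ((x - 1) / (x + 1))"
    unfolding u by simp
  then show ?thesis unfolding r s3 .
qed

theorem lemma4p2:
  fixes n :: nat and \<delta> :: "real list"
  assumes "n \<ge> 3"
    and "length \<delta> = n"
    and "char_poly (LS n) = (\<Prod>d\<leftarrow>\<delta>. [:- d, 1:])"
  shows "(\<Sum>i<n. 1 / \<delta> ! i) =
           sqrt 3 * real n / 2 * ((pp ^ n - qq ^ n) / (pp ^ n + qq ^ n + 2))"
proof -
  have L: "LS n \<in> carrier_mat n n" unfolding LS_def by simp
  have M: "MM n \<in> carrier_mat n n" unfolding MM_def by simp
  have LM: "LS n * MM n = 1\<^sub>m n" by (rule LM[OF assms(1)])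
  have MLi: "MM n * LS n = 1\<^sub>m n" by (rule mat_mult_left_right_inverse[OF L M LM])
  obtain T P Q where sd: "schur_decomposition (LS n) \<delta> = (T,P,Q)" by (cases "schur_decomposition (LS n) \<delta>") auto
  from schur_decomposition[OF L assms(3) sd]
  have sim: "similar_mat_wit (LS n) T P Q" and ut: "upper_triangular T" and dg: "diag_mat T = \<delta>" by auto
  note s = similar_mat_witD2[OF L sim]
  have T: "T \<in> carrier_mat n n" and P: "P \<in> carrier_mat n n" and Q: "Q \<in> carrier_mat n n" using s by auto
  define N where "N = Q * MM n * P"
  have N: "N \<in> carrier_mat n n" unfolding N_def using Q M P by auto
  have TQLP: "T = Q * LS n * P"
  proof -
    have "Q * LS n * P = Q * (P * T * Q) * P" using s by simp
    also have "\<dots> = (Q * P) * T * (Q * P)" using P Q T by (simp add: assoc_mult_mat[of _ n n _ n _ n])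
    also have "\<dots> = T" using s T by simp
    finally show ?thesis by simp
  qed
  have TN: "T * N = 1\<^sub>m n"
  proof -
    have "T * N = Q * LS n * (P * Q) * MM n * P" unfolding TQLP N_def using P Q L M
      by (simp add: assoc_mult_mat[of _ n n _ n _ n])
    also have "\<dots> = Q * (LS n * MM n) * P" using s P Q L M by (simp add: assoc_mult_mat[of _ n n _ n _ n])
    also have "\<dots> = 1\<^sub>m n" using s P Q LM by simp
    finally show ?thesis .
  qed
  have NT: "N * T = 1\<^sub>m n"
  proof -
    have "N * T = Q * MM n * (P * Q) * LS n * P" unfolding TQLP N_def using P Q L M
      by (simp add: assoc_mult_mat[of _ n n _ n _ n])
    also have "\<dots> = Q * (MM n * LS n) * P" using s P Q L M by (simp add: assoc_mult_mat[of _ n n _ n _ n])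
    also have "\<dots> = 1\<^sub>m n" using s P Q MLi by simp
    finally show ?thesis .
  qed
  have dT: "T $$ (i,i) = \<delta> ! i" if "i < n" for i
    using dg that T unfolding diag_mat_def by auto
  have "(\<Sum>i<n. 1 / \<delta> ! i) = (\<Sum>i<n. N $$ (i,i))"
    using tri_inv_diag[OF T N ut TN NT] dT by simp
  also have "\<dots> = (\<Sum>i<n. (Q * (MM n * P)) $$ (i,i))" unfolding N_def using Q M P by simp
  also have "\<dots> = (\<Sum>i<n. ((MM n * P) * Q) $$ (i,i))" by (rule trace_swap) (use Q M P in auto)
  also have "\<dots> = (\<Sum>i<n. MM n $$ (i,i))" using s M P Q by simp
  also have "\<dots> = (\<Sum>i<n. 3 * uu n 0)" unfolding MM_def dd_def by simp
  also have "\<dots> = 3 * real n * uu n 0" by simp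
  finally show ?thesis using final_val by simp
qed

end
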